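(* Let $D=((a_n),(b_n))$ be an almost periodic divisor with a regular indexing. Then for every sequence $(h_k)\subset\mathbb{C}$ there exist a subsequence $(h'_k)$, a divisor $\widetilde D=((\tilde a_n),(\tilde b_n))$ which is almost periodic with a regular indexing, and bijections $\tilde\sigma(k,\cdot):\mathbb{N}\to\mathbb{N}$ such that $$\sup_n|a_{\tilde\sigma(k,n)}+h'_k-\tilde a_n|\to0,\qquad \sup_n|b_{\tilde\sigma(k,n)}+h'_k-\tilde b_n|\to0\qquad (k\to\infty).$$
   Context: A divisor $D=((a_n)_{n\in\mathbb{N}},(b_n)_{n\in\mathbb{N}})$ consists of two sequences in $\mathbb{C}$ without finite accumulation points. It is almost periodic with a regular indexing if for every $\varepsilon>0$ there is $L$ such that every disc of radius $L$ contains a point $\tau$ for which some bijection $\sigma:\mathbb{N}\to\mathbb{N}$ satisfies $|a_n+\tau-a_{\sigma(n)}|<\varepsilon$ and $|b_n+\tau-b_{\sigma(n)}|<\varepsilon$ for all $n$. *)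

theory Defs
  imports "HOL-Analysis.Analysis"
begin

definition no_finite_acc :: "(nat \<Rightarrow> complex) \<Rightarrow> bool" where
  "no_finite_acc a \<longleftrightarrow> (\<forall>r::real. finite {n. cmod (a n) \<le> r})"

definition divisor :: "(nat \<Rightarrow> complex) \<Rightarrow> (nat \<Rightarrow> complex) \<Rightarrow> bool" where
  "divisor a b \<longleftrightarrow> no_finite_acc a \<and> no_finite_acc b"

definition ap_regular_divisor :: "(nat \<Rightarrow> complex) \<Rightarrow> (nat \<Rightarrow> complex) \<Rightarrow> bool" where
  "ap_regular_divisor a b \<longleftrightarrow> divisor a b \<and>
    (\<forall>\<epsilon>>0. \<exists>L. \<forall>c::complex. \<exists>\<tau>. dist \<tau> c < L \<and>
       (\<exists>\<sigma>::nat \<Rightarrow> nat. bij \<sigma> \<and>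
          (\<forall>n. cmod (a n + \<tau> - a (\<sigma> n)) < \<epsilon> \<and> cmod (b n + \<tau> - b (\<sigma> n)) < \<epsilon>)))"

end

theory Submission
  imports Defs
begin

lemma pointwise_subseq:
  fixes s :: "nat \<Rightarrow> nat \<Rightarrow> complex" and L :: "nat \<Rightarrow> real"
  assumes "\<And>k m. cmod (s k m) \<le> L m"
  shows "\<exists>r S. strict_mono r \<and> (\<forall>m. (\<lambda>k. s (r k) m) \<longlonglongrightarrow> S m)"
proof -
  define K where "K = PiE UNIV (\<lambda>m. cball (0::complex) (L m))"
  have "compactin (product_topology (\<lambda>i. euclidean) UNIV) K"
    unfolding K_def by (subst compactin_PiE) auto
  hence "compact K" by (simp add: euclidean_product_topology)
  hence sc: "seq_compact K" by (rule compact_imp_seq_compact)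
  have "\<And>k. s k \<in> K" using assms unfolding K_def by (auto simp: dist_norm)
  then obtain S r where "S \<in> K" "strict_mono r" and lim: "(s \<circ> r) \<longlonglongrightarrow> S"
    using sc by (metis seq_compactE)
  have "(\<lambda>k. s (r k) m) \<longlonglongrightarrow> S m" for m
  proof -
    have "isCont (\<lambda>x::nat\<Rightarrow>complex. x m) S"
      using continuous_on_product_coordinates[of m] continuous_on_eq_continuous_at by blast
    from isCont_tendsto_compose[OF this lim] show ?thesis by (simp add: o_def)
  qed
  thus ?thesis using \<open>strict_mono r\<close> by blast
qed


lemma tri3: "cmod (-x + y + z) \<le> cmod x + cmod y + cmod z"
  using norm_triangle_ineq[of "-x+y" z] norm_triangle_ineq[of "-x" y] by simp

lemma nfa_transfer:
  assumes "no_finite_acc a" "inj \<alpha>" "\<And>n. cmod (a (\<alpha> n) + t - ta n) \<le> C"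
  shows "no_finite_acc ta"
  unfolding no_finite_acc_def
proof
  fix R :: real
  have "{n. cmod (ta n) \<le> R} \<subseteq> \<alpha> -` {p. cmod (a p) \<le> R + C + cmod t}"
  proof
    fix n assume "n \<in> {n. cmod (ta n) \<le> R}"
    hence "cmod (ta n) \<le> R" by simp
    moreover have "cmod (a (\<alpha> n)) \<le> cmod (a (\<alpha> n) + t - ta n) + cmod t + cmod (ta n)"
      using tri3[of "-(a (\<alpha> n) + t - ta n)" "-t" "ta n"] by (simp add: norm_minus_commute)
    ultimately show "n \<in> \<alpha> -` {p. cmod (a p) \<le> R + C + cmod t}" using assms(3)[of n] by simp
  qed
  moreover have "finite (\<alpha> -` {p. cmod (a p) \<le> R + C + cmod t})"
    using assms(1,2) unfolding no_finite_acc_def by (intro finite_vimageI) auto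
  ultimately show "finite {n. cmod (ta n) \<le> R}" by (rule finite_subset)
qed

lemma ap_transfer:
  assumes ap: "ap_regular_divisor a b"
  and cl: "\<And>\<epsilon>. \<epsilon> > 0 \<Longrightarrow> \<exists>t \<alpha>. bij \<alpha> \<and> (\<forall>n. cmod (a (\<alpha> n) + t - ta n) \<le> \<epsilon> \<and> cmod (b (\<alpha> n) + t - tb n) \<le> \<epsilon>)"
  shows "ap_regular_divisor ta tb"
proof -
  obtain t \<alpha> where t: "bij \<alpha>" "\<forall>n. cmod (a (\<alpha> n) + t - ta n) \<le> 1 \<and> cmod (b (\<alpha> n) + t - tb n) \<le> 1"
    using cl[of 1] by auto
  have div: "divisor ta tb"
    using ap t unfolding ap_regular_divisor_def divisor_def
    by (meson bij_is_inj nfa_transfer)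
  have "\<exists>L. \<forall>c::complex. \<exists>\<tau>. dist \<tau> c < L \<and>
       (\<exists>\<sigma>::nat \<Rightarrow> nat. bij \<sigma> \<and>
          (\<forall>n. cmod (ta n + \<tau> - ta (\<sigma> n)) < \<epsilon> \<and> cmod (tb n + \<tau> - tb (\<sigma> n)) < \<epsilon>))"
    if e: "\<epsilon> > 0" for \<epsilon>
  proof -
    obtain L where L: "\<forall>c::complex. \<exists>\<tau>. dist \<tau> c < L \<and>
       (\<exists>\<sigma>::nat \<Rightarrow> nat. bij \<sigma> \<and>
          (\<forall>n. cmod (a n + \<tau> - a (\<sigma> n)) < \<epsilon>/2 \<and> cmod (b n + \<tau> - b (\<sigma> n)) < \<epsilon>/2))"
      using ap e unfolding ap_regular_divisor_def by (meson half_gt_zero)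
    obtain t \<alpha> where t: "bij \<alpha>" "\<And>n. cmod (a (\<alpha> n) + t - ta n) \<le> \<epsilon>/5"
       "\<And>n. cmod (b (\<alpha> n) + t - tb n) \<le> \<epsilon>/5"
      using cl[of "\<epsilon>/5"] e by auto
    show ?thesis
    proof (rule exI[of _ L], rule allI)
      fix c :: complex
      obtain \<tau> \<sigma> where \<tau>: "dist \<tau> c < L" "bij \<sigma>"
        "\<And>n. cmod (a n + \<tau> - a (\<sigma> n)) < \<epsilon>/2" "\<And>n. cmod (b n + \<tau> - b (\<sigma> n)) < \<epsilon>/2"
        using L by blast
      define \<pi> where "\<pi> = inv \<alpha> \<circ> \<sigma> \<circ> \<alpha>"
      have bp: "bij \<pi>" unfolding \<pi>_def using t(1) \<tau>(2) by (intro bij_comp bij_imp_bij_inv) auto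
      have ap: "\<alpha> (\<pi> n) = \<sigma> (\<alpha> n)" for n
        unfolding \<pi>_def using t(1) by (simp add: bij_is_surj surj_f_inv_f)
      have key: "cmod (f n + \<tau> - f (\<pi> n)) < \<epsilon>"
        if h1: "\<And>n. cmod (g (\<alpha> n) + t - f n) \<le> \<epsilon>/5" and h2: "\<And>n. cmod (g n + \<tau> - g (\<sigma> n)) < \<epsilon>/2"
        for f g :: "nat \<Rightarrow> complex" and n
      proof -
        have eq: "f n + \<tau> - f (\<pi> n) = - (g (\<alpha> n) + t - f n) + (g (\<alpha> n) + \<tau> - g (\<sigma> (\<alpha> n))) + (g (\<alpha> (\<pi> n)) + t - f (\<pi> n))"
          by (simp add: ap algebra_simps)
        have "cmod (f n + \<tau> - f (\<pi> n)) \<le> cmod (g (\<alpha> n) + t - f n) + cmod (g (\<alpha> n) + \<tau> - g (\<sigma> (\<alpha> n))) + cmod (g (\<alpha> (\<pi> n)) + t - f (\<pi> n))"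
          unfolding eq by (rule tri3)
        also have "\<dots> < \<epsilon>/5 + \<epsilon>/2 + \<epsilon>/5" using h1[of n] h1[of "\<pi> n"] h2[of "\<alpha> n"] by linarith
        finally show ?thesis using e by linarith
      qed
      show "\<exists>\<tau>. dist \<tau> c < L \<and> (\<exists>\<sigma>. bij \<sigma> \<and> (\<forall>n. cmod (ta n + \<tau> - ta (\<sigma> n)) < \<epsilon> \<and> cmod (tb n + \<tau> - tb (\<sigma> n)) < \<epsilon>))"
        using \<tau> bp key[OF t(2) \<tau>(3)] key[OF t(3) \<tau>(4)] by blast
    qed
  qed
  thus ?thesis using div unfolding ap_regular_divisor_def by blast
qed


lemma tri4: "cmod (w + x + y + z) \<le> cmod w + cmod x + cmod y + cmod (z::complex)"
  using norm_triangle_ineq[of "w+x+y" z] norm_triangle_ineq[of "w+x" y] norm_triangle_ineq[of w x] by simp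

lemma cauchy_geo:
  fixes g :: "nat \<Rightarrow> complex"
  assumes st: "\<And>j. cmod (g (Suc j) - g j) \<le> 4 * (1/2)^j"
  shows "\<exists>l. g \<longlonglongrightarrow> l \<and> (\<forall>j. cmod (l - g j) \<le> 8 * (1/2)^j)"
proof -
  have tail: "cmod (g (j + d) - g j) \<le> 8 * (1/2)^j - 8 * (1/2)^(j+d)" for j d
  proof (induction d)
    case 0 then show ?case by simp
  next
    case (Suc d)
    have "cmod (g (j + Suc d) - g j) \<le> cmod (g (Suc (j + d)) - g (j+d)) + cmod (g (j + d) - g j)"
      using norm_triangle_ineq[of "g (Suc (j + d)) - g (j+d)" "g (j + d) - g j"] by simp
    also have "\<dots> \<le> 4 * (1/2)^(j+d) + (8 * (1/2)^j - 8 * (1/2)^(j+d))"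
      using st[of "j+d"] Suc.IH by linarith
    also have "\<dots> = 8 * (1/2)^j - 8 * (1/2)^(j + Suc d)" by simp
    finally show ?case .
  qed
  have tl: "cmod (g i - g j) \<le> 8 * (1/2)^j" if "i \<ge> j" for i j
  proof -
    define d where "d = i - j"
    have "i = j + d" using that unfolding d_def by simp
    have "(0::real) \<le> (1/2)^(j+d)" by simp
    moreover have "cmod (g i - g j) \<le> 8 * (1/2)^j - 8 * (1/2)^(j+d)"
      using tail[of j d] \<open>i = j + d\<close> by simp
    ultimately show ?thesis by linarith
  qed
  have "Cauchy g"
  proof (rule metric_CauchyI)
    fix e :: real assume "e > 0"
    then obtain M where M: "(1/2::real)^M < e/16" using real_arch_pow_inv[of "e/16" "1/2"] by auto
    show "\<exists>M. \<forall>m\<ge>M. \<forall>n\<ge>M. dist (g m) (g n) < e"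
    proof (rule exI[of _ M], intro allI impI)
      fix m n assume "m \<ge> M" "n \<ge> M"
      hence "cmod (g m - g M) \<le> 8 * (1/2)^M" "cmod (g n - g M) \<le> 8 * (1/2)^M" using tl by auto
      hence "cmod (g m - g n) \<le> 16 * (1/2)^M"
        using norm_triangle_ineq4[of "g m - g M" "g n - g M"] by simp
      thus "dist (g m) (g n) < e" using M by (simp add: dist_norm)
    qed
  qed
  then obtain l where l: "g \<longlonglongrightarrow> l" using Cauchy_convergent_iff convergent_def by blast
  have "cmod (l - g j) \<le> 8 * (1/2)^j" for j
  proof -
    have "(\<lambda>i. cmod (g i - g j)) \<longlonglongrightarrow> cmod (l - g j)"
      by (intro tendsto_intros l)
    thus ?thesis by (rule LIMSEQ_le_const2) (use tl in auto)
  qed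
  thus ?thesis using l by blast
qed

lemma choose_eventually:
  assumes mono: "\<And>k \<sigma> \<epsilon> \<epsilon>'. P k \<sigma> \<epsilon> \<Longrightarrow> \<epsilon> \<le> \<epsilon>' \<Longrightarrow> P k \<sigma> \<epsilon>'"
  and ev: "\<And>\<epsilon>::real. \<epsilon> > 0 \<Longrightarrow> eventually (\<lambda>k. \<exists>\<sigma>. P k \<sigma> \<epsilon>) sequentially"
  shows "\<exists>\<sigma>. \<forall>\<epsilon>>0. eventually (\<lambda>k. P k (\<sigma> k) \<epsilon>) sequentially"
proof -
  define M where "M k = Max {m. m \<le> k \<and> (\<exists>\<sigma>. P k \<sigma> (1 / real (Suc m)))}" for k
  define \<sigma> where "\<sigma> k = (SOME \<sigma>. P k \<sigma> (1 / real (Suc (M k))))" for k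
  have "eventually (\<lambda>k. P k (\<sigma> k) \<epsilon>) sequentially" if "\<epsilon> > 0" for \<epsilon>
  proof -
    obtain m0 where m0: "1 / real (Suc m0) < \<epsilon>"
      using reals_Archimedean[OF \<open>\<epsilon> > 0\<close>] by (auto simp: inverse_eq_divide)
    have "eventually (\<lambda>k. (\<exists>\<sigma>. P k \<sigma> (1 / real (Suc m0))) \<and> k \<ge> m0) sequentially"
      using ev[of "1 / real (Suc m0)"] eventually_ge_at_top[of m0] by (auto intro: eventually_conj)
    thus ?thesis
    proof (rule eventually_mono)
      fix k assume k: "(\<exists>\<sigma>. P k \<sigma> (1 / real (Suc m0))) \<and> k \<ge> m0"
      let ?A = "{m. m \<le> k \<and> (\<exists>\<sigma>. P k \<sigma> (1 / real (Suc m)))}"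
      have fin: "finite ?A" by (rule finite_subset[of _ "{..k}"]) auto
      have "m0 \<in> ?A" using k by auto
      hence "M k \<in> ?A" "m0 \<le> M k" unfolding M_def using fin Max_in Max_ge by blast+
      hence "P k (\<sigma> k) (1 / real (Suc (M k)))" unfolding \<sigma>_def by (auto intro: someI_ex)
      moreover have "1 / real (Suc (M k)) \<le> 1 / real (Suc m0)"
        by (rule divide_left_mono) (use \<open>m0 \<le> M k\<close> in auto)
      hence "1 / real (Suc (M k)) \<le> \<epsilon>" using m0 by linarith
      ultimately show "P k (\<sigma> k) \<epsilon>" by (rule mono)
    qed
  qed
  thus ?thesis by blast
qed

lemma rho_err:
  fixes f :: "nat \<Rightarrow> complex"
  assumes "cmod (f p + h - (f q1 + s1)) < e1" "cmod (f p + h - (f q0 + s0)) < e0"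
    "cmod (s0 - S0) < e0" "cmod (s1 - S1) < e1"
  shows "cmod (f q1 + S1 - (f q0 + S0)) \<le> 2*e0 + 2*e1"
proof -
  have eq: "f q1 + S1 - (f q0 + S0) = -(f p + h - (f q1 + s1)) + -(s1 - S1) + (f p + h - (f q0 + s0)) + (s0 - S0)"
    by (simp add: algebra_simps)
  have "cmod (f q1 + S1 - (f q0 + S0)) \<le> cmod (-(f p + h - (f q1 + s1))) + cmod (-(s1 - S1)) + cmod (f p + h - (f q0 + s0)) + cmod (s0 - S0)"
    unfolding eq by (rule tri4)
  moreover have "cmod (-(f p + h - (f q1 + s1))) = cmod (f p + h - (f q1 + s1))" "cmod (-(s1 - S1)) = cmod (s1 - S1)"
    by (rule norm_minus_cancel)+
  ultimately show ?thesis using assms by linarith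
qed

lemma fin_err:
  fixes f :: "nat \<Rightarrow> complex"
  assumes "cmod (f p + h - (f q + s)) < e" "cmod (s - S) < e" "cmod (f q + S - t) \<le> c"
  shows "cmod (f p + h - t) \<le> 2*e + c"
proof -
  have eq: "f p + h - t = (f p + h - (f q + s)) + (s - S) + (f q + S - t) + 0"
    by (simp add: algebra_simps)
  have "cmod (f p + h - t) \<le> cmod (f p + h - (f q + s)) + cmod (s - S) + cmod (f q + S - t) + cmod (0::complex)"
    unfolding eq by (rule tri4)
  thus ?thesis using assms by simp
qed

theorem mainTheorem10:
  fixes a b :: "nat \<Rightarrow> complex"
  assumes "ap_regular_divisor a b"
  shows "\<forall>h :: nat \<Rightarrow> complex. \<exists>r :: nat \<Rightarrow> nat. strict_mono r \<and>
    (\<exists>ta tb :: nat \<Rightarrow> complex. ap_regular_divisor ta tb \<and>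
      (\<exists>\<sigma> :: nat \<Rightarrow> nat \<Rightarrow> nat. (\<forall>k. bij (\<sigma> k)) \<and>
        (\<forall>\<epsilon>>0. \<forall>\<^sub>F k in sequentially.
            \<forall>n. cmod (a (\<sigma> k n) + h (r k) - ta n) \<le> \<epsilon> \<and>
                cmod (b (\<sigma> k n) + h (r k) - tb n) \<le> \<epsilon>)))"
proof (intro allI)
  fix h :: "nat \<Rightarrow> complex"
  define e where "e m = (1/2::real)^m" for m
  have epos: "e m > 0" for m unfolding e_def by simp
  have eSuc: "e (Suc m) = e m / 2" for m unfolding e_def by simp
  have Lex: "\<forall>m. \<exists>L. \<forall>c::complex. \<exists>\<tau>. dist \<tau> c < L \<and> (\<exists>\<sigma>::nat\<Rightarrow>nat. bij \<sigma> \<and>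
     (\<forall>n. cmod (a n + \<tau> - a (\<sigma> n)) < e m \<and> cmod (b n + \<tau> - b (\<sigma> n)) < e m))"
    using assms epos unfolding ap_regular_divisor_def by blast
  then obtain L where L: "\<And>m c. \<exists>\<tau>. dist \<tau> c < L m \<and> (\<exists>\<sigma>::nat\<Rightarrow>nat. bij \<sigma> \<and>
     (\<forall>n. cmod (a n + \<tau> - a (\<sigma> n)) < e m \<and> cmod (b n + \<tau> - b (\<sigma> n)) < e m))"
    using choice[OF Lex] by blast
  define Q where "Q m k p \<longleftrightarrow> dist (fst p) (h k) < L m \<and> bij (snd p) \<and>
     (\<forall>n. cmod (a n + fst p - a (snd p n)) < e m \<and> cmod (b n + fst p - b (snd p n)) < e m)"
     for m k and p :: "complex \<times> (nat \<Rightarrow> nat)"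
  have Fex: "\<forall>mk. \<exists>p. Q (fst mk) (snd mk) p"
  proof
    fix mk :: "nat \<times> nat"
    obtain \<tau>0 \<sigma>0 where "dist \<tau>0 (h (snd mk)) < L (fst mk)" "bij \<sigma>0"
      "\<forall>n. cmod (a n + \<tau>0 - a (\<sigma>0 n)) < e (fst mk) \<and> cmod (b n + \<tau>0 - b (\<sigma>0 n)) < e (fst mk)"
      using L[where m="fst mk" and c="h (snd mk)"] by blast
    thus "\<exists>p. Q (fst mk) (snd mk) p" unfolding Q_def by (intro exI[of _ "(\<tau>0, \<sigma>0)"]) simp
  qed
  then obtain F where F: "\<And>mk. Q (fst mk) (snd mk) (F mk)" using choice[OF Fex] by blast
  define \<tau> where "\<tau> m k = fst (F (m, k))" for m k
  define \<sigma> where "\<sigma> m k = snd (F (m, k))" for m k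
  have t\<sigma>1: "dist (\<tau> m k) (h k) < L m" for m k
    using F[of "(m,k)"] unfolding Q_def \<tau>_def \<sigma>_def by simp
  have t\<sigma>2: "bij (\<sigma> m k)" for m k
    using F[of "(m,k)"] unfolding Q_def \<tau>_def \<sigma>_def by simp
  have t\<sigma>3: "cmod (a n + \<tau> m k - a (\<sigma> m k n)) < e m" for m k n
    using F[of "(m,k)"] unfolding Q_def \<tau>_def \<sigma>_def by simp
  have t\<sigma>4: "cmod (b n + \<tau> m k - b (\<sigma> m k n)) < e m" for m k n
    using F[of "(m,k)"] unfolding Q_def \<tau>_def \<sigma>_def by simp
  note t\<sigma> = t\<sigma>1 t\<sigma>2 t\<sigma>3 t\<sigma>4
  define s where "s m k = h k - \<tau> m k" for m k
  have sb: "cmod (s m k) \<le> L m" for m k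
    using t\<sigma>(1)[of m k] unfolding s_def by (simp add: dist_norm norm_minus_commute)
  have sa: "cmod (a n + h k - (a (\<sigma> m k n) + s m k)) < e m" for m k n
    using t\<sigma>3[where m=m and k=k and n=n] unfolding s_def by (simp add: algebra_simps)
  have sb': "cmod (b n + h k - (b (\<sigma> m k n) + s m k)) < e m" for m k n
    using t\<sigma>4[where m=m and k=k and n=n] unfolding s_def by (simp add: algebra_simps)
  obtain r S where r: "strict_mono r" and lim: "\<And>m. (\<lambda>k. s m (r k)) \<longlonglongrightarrow> S m"
    using pointwise_subseq[of "\<lambda>k m. s m k" L] sb by blast
  have ev: "eventually (\<lambda>k. cmod (s m (r k) - S m) < \<epsilon>) sequentially" if "\<epsilon> > 0" for m \<epsilon>
    using lim[of m] that unfolding tendsto_iff by (simp add: dist_norm)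
  have rhoe: "\<exists>\<rho>. bij \<rho> \<and> (\<forall>n. cmod (a (\<rho> n) + S (Suc j) - (a n + S j)) \<le> 4 * e j \<and>
                          cmod (b (\<rho> n) + S (Suc j) - (b n + S j)) \<le> 4 * e j)" for j
  proof -
    have "eventually (\<lambda>k. cmod (s j (r k) - S j) < e j \<and> cmod (s (Suc j) (r k) - S (Suc j)) < e (Suc j)) sequentially"
      using ev[OF epos, of j] ev[OF epos, of "Suc j"] by (rule eventually_conj)
    then obtain N where N: "cmod (s j (r N) - S j) < e j" "cmod (s (Suc j) (r N) - S (Suc j)) < e (Suc j)"
      unfolding eventually_sequentially by blast
    define \<sigma>0 where "\<sigma>0 = \<sigma> j (r N)"
    define \<sigma>1 where "\<sigma>1 = \<sigma> (Suc j) (r N)"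
    have b0: "bij \<sigma>0" "bij \<sigma>1" unfolding \<sigma>0_def \<sigma>1_def using t\<sigma>(2) by auto
    show ?thesis
    proof (rule exI[of _ "\<sigma>1 \<circ> inv \<sigma>0"], intro conjI allI)
      show "bij (\<sigma>1 \<circ> inv \<sigma>0)" using b0 by (intro bij_comp bij_imp_bij_inv) auto
      fix n
      define p where "p = inv \<sigma>0 n"
      have pn: "\<sigma>0 p = n" unfolding p_def using b0 by (simp add: bij_is_surj surj_f_inv_f)
      have "4 * e j = 2 * e j + 2 * e (Suc j) + e j" using eSuc[of j] by simp
      moreover have "cmod (a (\<sigma>1 p) + S (Suc j) - (a (\<sigma>0 p) + S j)) \<le> 2 * e j + 2 * e (Suc j)"
        using sa[of p "r N" "Suc j"] sa[of p "r N" j] N unfolding \<sigma>0_def \<sigma>1_def by (intro rho_err) auto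
      moreover have "cmod (b (\<sigma>1 p) + S (Suc j) - (b (\<sigma>0 p) + S j)) \<le> 2 * e j + 2 * e (Suc j)"
        using sb'[of p "r N" "Suc j"] sb'[of p "r N" j] N unfolding \<sigma>0_def \<sigma>1_def by (intro rho_err) auto
      ultimately show "cmod (a ((\<sigma>1 \<circ> inv \<sigma>0) n) + S (Suc j) - (a n + S j)) \<le> 4 * e j"
        "cmod (b ((\<sigma>1 \<circ> inv \<sigma>0) n) + S (Suc j) - (b n + S j)) \<le> 4 * e j"
        using epos[of j] pn by (auto simp: p_def)
    qed
  qed
  then obtain \<rho> where \<rho>: "\<And>j. bij (\<rho> j)"
    "\<And>j n. cmod (a (\<rho> j n) + S (Suc j) - (a n + S j)) \<le> 4 * e j"
    "\<And>j n. cmod (b (\<rho> j n) + S (Suc j) - (b n + S j)) \<le> 4 * e j"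
    using rhoe by metis
  define \<beta> where "\<beta> = rec_nat id (\<lambda>j bj. \<rho> j \<circ> bj)"
  have \<beta>0: "\<beta> 0 = id" and \<beta>S: "\<beta> (Suc j) = \<rho> j \<circ> \<beta> j" for j unfolding \<beta>_def by simp_all
  have b\<beta>: "bij (\<beta> j)" for j
  proof (induction j)
    case 0 show ?case unfolding \<beta>0 by (rule bij_id)
  next
    case (Suc j) show ?case unfolding \<beta>S by (rule bij_comp[OF Suc \<rho>(1)])
  qed
  have tae: "\<forall>n. \<exists>l. (\<lambda>j. a (\<beta> j n) + S j) \<longlonglongrightarrow> l \<and> (\<forall>j. cmod (l - (a (\<beta> j n) + S j)) \<le> 8 * (1/2)^j)"
    using \<rho>(2) by (intro allI cauchy_geo) (simp add: \<beta>S e_def)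
  then obtain ta where ta: "\<And>n j. cmod (ta n - (a (\<beta> j n) + S j)) \<le> 8 * e j"
    using choice[OF tae] unfolding e_def by blast
  have tbe: "\<forall>n. \<exists>l. (\<lambda>j. b (\<beta> j n) + S j) \<longlonglongrightarrow> l \<and> (\<forall>j. cmod (l - (b (\<beta> j n) + S j)) \<le> 8 * (1/2)^j)"
    using \<rho>(3) by (intro allI cauchy_geo) (simp add: \<beta>S e_def)
  then obtain tb where tb: "\<And>n j. cmod (tb n - (b (\<beta> j n) + S j)) \<le> 8 * e j"
    using choice[OF tbe] unfolding e_def by blast
  have small: "\<exists>m. c * e m \<le> \<epsilon>" if eps: "\<epsilon> > 0" and cpos: "c > 0" for \<epsilon> c :: real
  proof -
    obtain m where "(1/2::real)^m < \<epsilon>/c" using real_arch_pow_inv[of "\<epsilon>/c" "1/2"] eps cpos by auto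
    thus ?thesis using eps cpos unfolding e_def by (intro exI[of _ m]) (simp add: field_simps)
  qed
  have apt: "ap_regular_divisor ta tb"
  proof (rule ap_transfer[OF assms])
    fix \<epsilon> :: real assume "\<epsilon> > 0"
    then obtain m where m: "8 * e m \<le> \<epsilon>" using small[of \<epsilon> 8] by auto
    show "\<exists>t \<alpha>. bij \<alpha> \<and> (\<forall>n. cmod (a (\<alpha> n) + t - ta n) \<le> \<epsilon> \<and> cmod (b (\<alpha> n) + t - tb n) \<le> \<epsilon>)"
      using ta[of _ m] tb[of _ m] m b\<beta>[of m]
      by (intro exI[of _ "S m"] exI[of _ "\<beta> m"]) (auto simp: norm_minus_commute intro: order_trans)
  qed
  define P where "P k \<sigma>' \<epsilon> \<longleftrightarrow> bij \<sigma>' \<and> (\<forall>n. cmod (a (\<sigma>' n) + h (r k) - ta n) \<le> \<epsilon> \<and>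
      cmod (b (\<sigma>' n) + h (r k) - tb n) \<le> \<epsilon>)" for k \<sigma>' and \<epsilon> :: real
  have "\<exists>\<sigma>'. \<forall>\<epsilon>>0. eventually (\<lambda>k. P k (\<sigma>' k) \<epsilon>) sequentially"
  proof (rule choose_eventually)
    show "P k \<sigma>' \<epsilon>'" if "P k \<sigma>' \<epsilon>" "\<epsilon> \<le> \<epsilon>'" for k \<sigma>' \<epsilon> \<epsilon>'
      using that unfolding P_def by (meson order_trans)
    fix \<epsilon> :: real assume "\<epsilon> > 0"
    then obtain m where m: "10 * e m \<le> \<epsilon>" using small[of \<epsilon> 10] by auto
    show "eventually (\<lambda>k. \<exists>\<sigma>'. P k \<sigma>' \<epsilon>) sequentially"
      using ev[OF epos, of m]
    proof (rule eventually_mono)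
      fix k assume k: "cmod (s m (r k) - S m) < e m"
      define \<sigma>0 where "\<sigma>0 = \<sigma> m (r k)"
      have b0: "bij \<sigma>0" unfolding \<sigma>0_def using t\<sigma>(2) by auto
      show "\<exists>\<sigma>'. P k \<sigma>' \<epsilon>" unfolding P_def
      proof (rule exI[of _ "inv \<sigma>0 \<circ> \<beta> m"], intro conjI allI)
        show "bij (inv \<sigma>0 \<circ> \<beta> m)" using b0 b\<beta> by (intro bij_comp bij_imp_bij_inv) auto
        fix n
        define p where "p = inv \<sigma>0 (\<beta> m n)"
        have pn: "\<sigma>0 p = \<beta> m n" unfolding p_def using b0 by (simp add: bij_is_surj surj_f_inv_f)
        have "cmod (a p + h (r k) - ta n) \<le> 2 * e m + 8 * e m"
          using sa[of p "r k" m] k ta[of n m] pn unfolding \<sigma>0_def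
          by (intro fin_err[where q = "\<sigma>0 p" and s = "s m (r k)" and S = "S m"]) (auto simp: \<sigma>0_def norm_minus_commute)
        moreover have "cmod (b p + h (r k) - tb n) \<le> 2 * e m + 8 * e m"
          using sb'[of p "r k" m] k tb[of n m] pn unfolding \<sigma>0_def
          by (intro fin_err[where q = "\<sigma>0 p" and s = "s m (r k)" and S = "S m"]) (auto simp: \<sigma>0_def norm_minus_commute)
        ultimately show "cmod (a ((inv \<sigma>0 \<circ> \<beta> m) n) + h (r k) - ta n) \<le> \<epsilon>"
          "cmod (b ((inv \<sigma>0 \<circ> \<beta> m) n) + h (r k) - tb n) \<le> \<epsilon>"
          using m by (auto simp: p_def)
      qed
    qed
  qed
  then obtain \<sigma>' where \<sigma>': "\<And>\<epsilon>. \<epsilon> > 0 \<Longrightarrow> eventually (\<lambda>k. P k (\<sigma>' k) \<epsilon>) sequentially" by blast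
  define \<sigma>'' where "\<sigma>'' k = (if bij (\<sigma>' k) then \<sigma>' k else id)" for k
  have bij'': "\<forall>k. bij (\<sigma>'' k)" unfolding \<sigma>''_def by simp
  have ev'': "\<forall>\<epsilon>>0. \<forall>\<^sub>F k in sequentially. \<forall>n. cmod (a (\<sigma>'' k n) + h (r k) - ta n) \<le> \<epsilon> \<and>
                cmod (b (\<sigma>'' k n) + h (r k) - tb n) \<le> \<epsilon>"
  proof (intro allI impI)
    fix \<epsilon> :: real assume "\<epsilon> > 0"
    show "\<forall>\<^sub>F k in sequentially. \<forall>n. cmod (a (\<sigma>'' k n) + h (r k) - ta n) \<le> \<epsilon> \<and>
                cmod (b (\<sigma>'' k n) + h (r k) - tb n) \<le> \<epsilon>"
      using \<sigma>'[OF \<open>\<epsilon> > 0\<close>] by (rule eventually_mono) (simp add: P_def \<sigma>''_def)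
  qed
  show "\<exists>r. strict_mono r \<and> (\<exists>ta tb. ap_regular_divisor ta tb \<and> (\<exists>\<sigma>. (\<forall>k. bij (\<sigma> k)) \<and>
        (\<forall>\<epsilon>>0. \<forall>\<^sub>F k in sequentially. \<forall>n. cmod (a (\<sigma> k n) + h (r k) - ta n) \<le> \<epsilon> \<and>
                cmod (b (\<sigma> k n) + h (r k) - tb n) \<le> \<epsilon>)))"
    using r apt bij'' ev'' by blast
qed

end
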